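(* Let $\bar f:[a,b]\to\mathbb{R}_\mathcal{I}$ be an interval-valued function with $\bar f(x)=\langle f_c(x);f_w(x)\rangle$. Then $\bar f$ is differentiable at $x\in[a,b]$ if and only if $f_c$ is differentiable at $x$ and $f_w$ is multiplicatively differentiable at $x$. Moreover, in that case $$\bar f'(x)=\langle f_c'(x);\,f_w^*(x)\rangle,$$ where $f_w^*(x)=\lim_{h\to0}\left(\frac{f_w(x+h)}{f_w(x)}\right)^{1/h}=e^{(\ln f_w)'(x)}$ is the multiplicative derivative of $f_w$ at $x$.
   Context: An interval number is a closed interval $\bar a=[a_l,a_r]$ with $a_l<a_r$ real; $\mathbb{R}_\mathcal{I}$ is the set of interval numbers. Write $a_c=(a_l+a_r)/2$, $a_w=(a_r-a_l)/2>0$ and $\bar a=\langle a_c;a_w\rangle=[a_c-a_w,a_c+a_w]$. Operations: $\bar a-\bar b=\langle a_c-b_c;a_w/b_w\rangle$, and for real $k$, $k\bar a=\langle ka_c;a_w^k\rangle$; for real $h\neq0$, $\bar c/h$ means $\langle c_c/h;\,c_w^{1/h}\rangle$. Distance: $d(\bar a,\bar b)=\sqrt{(a_c-b_c)^2+(\ln a_w-\ln b_w)^2}$, and limits in $\mathbb{R}_\mathcal{I}$ are taken with respect to $d$. For an interval-valued function $\bar f:[a,b]\to\mathbb{R}_\mathcal{I}$, $\bar f(x)=[f_l(x),f_r(x)]$, put $f_c=(f_l+f_r)/2$, $f_w=(f_r-f_l)/2$. $\bar f$ is differentiable at $x_0$ if there is $\bar f'(x_0)\in\mathbb{R}_\mathcal{I}$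 with $\bar f'(x_0)=\lim_{h\to0}\frac{\bar f(x_0+h)-\bar f(x_0)}{h}$ (with $x_0+h\in[a,b]$). A positive function $g$ is multiplicatively differentiable at $x$ if $g^*(x)=\lim_{h\to0}(g(x+h)/g(x))^{1/h}$ exists. *)

theory Defs
  imports "HOL-Analysis.Analysis"
begin

text \<open>Interval numbers in midpoint-radius form: a pair (c, w) stands for
  the interval [c - w, c + w]; valid interval numbers have w > 0.\<close>

type_synonym inum = "real \<times> real"

definition inums :: "inum set" where
  "inums = {p. snd p > 0}"

definition inum_minus :: "inum \<Rightarrow> inum \<Rightarrow> inum" where
  "inum_minus A B = (fst A - fst B, snd A / snd B)"

definition inum_div_real :: "inum \<Rightarrow> real \<Rightarrow> inum" where
  "inum_div_real C h = (fst C / h, snd C powr (1 / h))"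

definition inum_dist :: "inum \<Rightarrow> inum \<Rightarrow> real" where
  "inum_dist A B = sqrt ((fst A - fst B)^2 + (ln (snd A) - ln (snd B))^2)"

definition ivf_has_deriv ::
  "(real \<Rightarrow> real) \<Rightarrow> (real \<Rightarrow> real) \<Rightarrow> real \<Rightarrow> real \<Rightarrow> real \<Rightarrow> inum \<Rightarrow> bool" where
  "ivf_has_deriv fc fw a b x0 D \<longleftrightarrow>
     D \<in> inums \<and>
     ((\<lambda>h. inum_dist
             (inum_div_real (inum_minus (fc (x0 + h), fw (x0 + h)) (fc x0, fw x0)) h) D)
        \<longlongrightarrow> 0) (at 0 within {h. x0 + h \<in> {a..b}})"

definition ivf_differentiable ::
  "(real \<Rightarrow> real) \<Rightarrow> (real \<Rightarrow> real) \<Rightarrow> real \<Rightarrow> real \<Rightarrow> real \<Rightarrow> bool" where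
  "ivf_differentiable fc fw a b x0 \<longleftrightarrow> (\<exists>D. ivf_has_deriv fc fw a b x0 D)"

text \<open>Multiplicative derivative of a positive function g at x (relative to [a,b]):
  (g(x+h)/g(x)) powr (1/h) tends to L, where L is a positive real
  (the multiplicative derivative lives in the positive reals).\<close>
definition mult_has_deriv ::
  "(real \<Rightarrow> real) \<Rightarrow> real \<Rightarrow> real \<Rightarrow> real \<Rightarrow> real \<Rightarrow> bool" where
  "mult_has_deriv g a b x L \<longleftrightarrow>
     L > 0 \<and> ((\<lambda>h. (g (x + h) / g x) powr (1 / h)) \<longlongrightarrow> L) (at 0 within {h. x + h \<in> {a..b}})"

definition mult_differentiable :: "(real \<Rightarrow> real) \<Rightarrow> real \<Rightarrow> real \<Rightarrow> real \<Rightarrow> bool" where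
  "mult_differentiable g a b x \<longleftrightarrow> (\<exists>L. mult_has_deriv g a b x L)"

end

theory Submission imports Defs begin
lemma shift_lim:
  fixes g :: "real \<Rightarrow> 'b::metric_space"
  shows "((\<lambda>h. g (x+h)) \<longlongrightarrow> l) (at 0 within {h. x+h \<in> S}) \<longleftrightarrow> (g \<longlongrightarrow> l) (at x within S)"
  unfolding tendsto_iff eventually_at
proof (intro iffI allI impI)
  fix e :: real assume A: "\<forall>e>0. \<exists>d>0. \<forall>h\<in>{h. x + h \<in> S}. h \<noteq> 0 \<and> dist h 0 < d \<longrightarrow> dist (g (x + h)) l < e" and e: "e > 0"
  then obtain d where d: "d > 0" "\<forall>h\<in>{h. x + h \<in> S}. h \<noteq> 0 \<and> dist h 0 < d \<longrightarrow> dist (g (x + h)) l < e" by blast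
  show "\<exists>d>0. \<forall>y\<in>S. y \<noteq> x \<and> dist y x < d \<longrightarrow> dist (g y) l < e"
  proof (intro exI[of _ d] conjI ballI impI)
    fix y assume "y \<in> S" "y \<noteq> x \<and> dist y x < d"
    then show "dist (g y) l < e" using d(2)[rule_format, of "y - x"] by (auto simp: dist_real_def)
  qed (rule d(1))
next
  fix e :: real assume A: "\<forall>e>0. \<exists>d>0. \<forall>y\<in>S. y \<noteq> x \<and> dist y x < d \<longrightarrow> dist (g y) l < e" and e: "e > 0"
  then obtain d where d: "d > 0" "\<forall>y\<in>S. y \<noteq> x \<and> dist y x < d \<longrightarrow> dist (g y) l < e" by blast
  show "\<exists>d>0. \<forall>h\<in>{h. x + h \<in> S}. h \<noteq> 0 \<and> dist h 0 < d \<longrightarrow> dist (g (x + h)) l < e"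
  proof (intro exI[of _ d] conjI ballI impI)
    fix h assume "h \<in> {h. x + h \<in> S}" "h \<noteq> 0 \<and> dist h 0 < d"
    then show "dist (g (x+h)) l < e" using d(2)[rule_format, of "x+h"] by (auto simp: dist_real_def)
  qed (rule d(1))
qed

theorem theorem4p2:
  fixes fc fw :: "real \<Rightarrow> real" and a b x :: real
  assumes "a < b"
    and "\<forall>t\<in>{a..b}. fw t > 0"
    and "x \<in> {a..b}"
  shows "(ivf_differentiable fc fw a b x \<longleftrightarrow>
            fc differentiable (at x within {a..b}) \<and> mult_differentiable fw a b x)
         \<and> (\<forall>Dc L. (fc has_real_derivative Dc) (at x within {a..b}) \<and> mult_has_deriv fw a b x L
              \<longrightarrow> (\<forall>D. ivf_has_deriv fc fw a b x D \<longleftrightarrow> D = (Dc, L))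
                  \<and> ((\<lambda>t. ln (fw t)) has_real_derivative ln L) (at x within {a..b}))"
proof -
  define S where "S = {a..b}"
  define F where "F = at (0::real) within {h. x+h \<in> S}"
  define qc where "qc h = (fc (x+h) - fc x) / h" for h
  define qw where "qw h = (fw (x+h) / fw x) powr (1/h)" for h
  have fwx: "fw x > 0" using assms by auto
  have evF: "eventually (\<lambda>h. h \<noteq> 0 \<and> x + h \<in> S) F"
    unfolding F_def eventually_at_filter by simp
  have F1: "(fc has_real_derivative Dc) (at x within S) \<longleftrightarrow> (qc \<longlongrightarrow> Dc) F" for Dc
    unfolding has_field_derivative_iff F_def qc_def
    using shift_lim[of "\<lambda>y. (fc y - fc x) / (y - x)" x Dc S] by simp
  have F2: "((\<lambda>t. ln (fw t)) has_real_derivative c) (at x within S) \<longleftrightarrow> ((\<lambda>h. ln (qw h)) \<longlongrightarrow> c) F" for c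
  proof -
    have "((\<lambda>t. ln (fw t)) has_real_derivative c) (at x within S) \<longleftrightarrow>
      ((\<lambda>h. (ln (fw (x+h)) - ln (fw x)) / h) \<longlongrightarrow> c) F"
      unfolding has_field_derivative_iff F_def
      using shift_lim[of "\<lambda>y. (ln (fw y) - ln (fw x)) / (y - x)" x c S] by simp
    also have "\<dots> \<longleftrightarrow> ((\<lambda>h. ln (qw h)) \<longlongrightarrow> c) F"
    proof (rule tendsto_cong)
      show "\<forall>\<^sub>F h in F. (ln (fw (x+h)) - ln (fw x)) / h = ln (qw h)"
        using evF
      proof (rule eventually_mono)
        fix h assume h: "h \<noteq> 0 \<and> x + h \<in> S"
        then have p: "fw (x+h) > 0" using assms S_def by auto
        have "ln (qw h) = (1/h) * ln (fw (x+h) / fw x)"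
          unfolding qw_def using p fwx by (simp add: ln_powr)
        also have "\<dots> = (ln (fw (x+h)) - ln (fw x)) / h"
          using p fwx by (simp add: ln_div)
        finally show "(ln (fw (x+h)) - ln (fw x)) / h = ln (qw h)" by simp
      qed
    qed
    finally show ?thesis .
  qed
  have qwpos: "eventually (\<lambda>h. qw h > 0) F"
    using evF
  proof (rule eventually_mono)
    fix h assume h: "h \<noteq> 0 \<and> x + h \<in> S"
    then have p: "fw (x+h) > 0" using assms S_def by auto
    then show "qw h > 0" unfolding qw_def using fwx by simp
  qed
  have F3: "(qw \<longlongrightarrow> L) F \<longleftrightarrow> ((\<lambda>h. ln (qw h)) \<longlongrightarrow> ln L) F" if L: "L > 0" for L
  proof
    assume "(qw \<longlongrightarrow> L) F"
    then show "((\<lambda>h. ln (qw h)) \<longlongrightarrow> ln L) F" using L by (intro tendsto_ln) auto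
  next
    assume "((\<lambda>h. ln (qw h)) \<longlongrightarrow> ln L) F"
    then have "((\<lambda>h. exp (ln (qw h))) \<longlongrightarrow> exp (ln L)) F" by (rule tendsto_exp)
    then have "((\<lambda>h. exp (ln (qw h))) \<longlongrightarrow> L) F" using L by simp
    moreover have "eventually (\<lambda>h. exp (ln (qw h)) = qw h) F"
      using qwpos by (rule eventually_mono) simp
    ultimately show "(qw \<longlongrightarrow> L) F" by (rule Lim_transform_eventually)
  qed
  have F4: "ivf_has_deriv fc fw a b x D \<longleftrightarrow> snd D > 0 \<and> (qc \<longlongrightarrow> fst D) F \<and> ((\<lambda>h. ln (qw h)) \<longlongrightarrow> ln (snd D)) F" for D
  proof -
    have eq: "inum_dist (inum_div_real (inum_minus (fc (x + h), fw (x + h)) (fc x, fw x)) h) D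
       = dist (qc h, ln (qw h)) (fst D, ln (snd D))" for h
      unfolding inum_dist_def inum_div_real_def inum_minus_def qc_def qw_def dist_Pair_Pair dist_real_def
      by simp
    have "((\<lambda>h. (qc h, ln (qw h))) \<longlongrightarrow> (fst D, ln (snd D))) F \<longleftrightarrow>
       (qc \<longlongrightarrow> fst D) F \<and> ((\<lambda>h. ln (qw h)) \<longlongrightarrow> ln (snd D)) F"
    proof
      assume A: "((\<lambda>h. (qc h, ln (qw h))) \<longlongrightarrow> (fst D, ln (snd D))) F"
      show "(qc \<longlongrightarrow> fst D) F \<and> ((\<lambda>h. ln (qw h)) \<longlongrightarrow> ln (snd D)) F"
        using tendsto_fst[OF A] tendsto_snd[OF A] by simp
    next
      assume "(qc \<longlongrightarrow> fst D) F \<and> ((\<lambda>h. ln (qw h)) \<longlongrightarrow> ln (snd D)) F"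
      then show "((\<lambda>h. (qc h, ln (qw h))) \<longlongrightarrow> (fst D, ln (snd D))) F"
        by (intro tendsto_Pair) auto
    qed
    moreover have "((\<lambda>h. (qc h, ln (qw h))) \<longlongrightarrow> (fst D, ln (snd D))) F \<longleftrightarrow>
       ((\<lambda>h. dist (qc h, ln (qw h)) (fst D, ln (snd D))) \<longlongrightarrow> 0) F"
      by (rule tendsto_dist_iff)
    ultimately show ?thesis
      unfolding ivf_has_deriv_def inums_def eq F_def[symmetric] S_def[symmetric]
      by simp
  qed
  have F5: "F \<noteq> bot"
  proof
    assume "F = bot"
    then have "((\<lambda>h. x + h) \<longlongrightarrow> c) F" for c by simp
    then have "((\<lambda>y. y) \<longlongrightarrow> c) (at x within S)" for c
      using shift_lim[of "\<lambda>y. y" x c S] F_def by simp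
    moreover have "at x within S \<noteq> bot"
      using assms S_def by (simp add: trivial_limit_within islimpt_Icc)
    ultimately show False using tendsto_unique[of "at x within S" "\<lambda>y. y" 0 1] by auto
  qed
  have MD: "mult_has_deriv fw a b x L \<longleftrightarrow> L > 0 \<and> (qw \<longlongrightarrow> L) F" for L
    unfolding mult_has_deriv_def qw_def F_def S_def by simp
  show ?thesis
  proof (intro conjI allI impI)
    show "ivf_differentiable fc fw a b x \<longleftrightarrow>
            fc differentiable (at x within {a..b}) \<and> mult_differentiable fw a b x"
    proof
      assume "ivf_differentiable fc fw a b x"
      then obtain D where D: "snd D > 0" "(qc \<longlongrightarrow> fst D) F" "((\<lambda>h. ln (qw h)) \<longlongrightarrow> ln (snd D)) F"
        unfolding ivf_differentiable_def F4 by blast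
      have "(fc has_real_derivative fst D) (at x within S)" using F1 D(2) by blast
      moreover have "mult_has_deriv fw a b x (snd D)" using MD F3 D by blast
      ultimately show "fc differentiable (at x within {a..b}) \<and> mult_differentiable fw a b x"
        unfolding real_differentiable_def mult_differentiable_def S_def by blast
    next
      assume "fc differentiable (at x within {a..b}) \<and> mult_differentiable fw a b x"
      then obtain Dc L where "(fc has_real_derivative Dc) (at x within S)" "mult_has_deriv fw a b x L"
        unfolding real_differentiable_def mult_differentiable_def S_def by blast
      then have "snd (Dc, L) > 0" "(qc \<longlongrightarrow> fst (Dc, L)) F" "((\<lambda>h. ln (qw h)) \<longlongrightarrow> ln (snd (Dc, L))) F"
        using F1 MD F3 by auto
      then show "ivf_differentiable fc fw a b x"
        unfolding ivf_differentiable_def F4 by blast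
    qed
  next
    fix Dc L assume A: "(fc has_real_derivative Dc) (at x within {a..b}) \<and> mult_has_deriv fw a b x L"
    then have c: "(qc \<longlongrightarrow> Dc) F" and L: "L > 0" "(qw \<longlongrightarrow> L) F"
      using F1 MD S_def by auto
    have lnL: "((\<lambda>h. ln (qw h)) \<longlongrightarrow> ln L) F" using F3 L by blast
    then show "((\<lambda>t. ln (fw t)) has_real_derivative ln L) (at x within {a..b})"
      using F2 S_def by simp
    fix D
    show "ivf_has_deriv fc fw a b x D \<longleftrightarrow> D = (Dc, L)"
    proof
      assume "ivf_has_deriv fc fw a b x D"
      then have D: "snd D > 0" "(qc \<longlongrightarrow> fst D) F" "((\<lambda>h. ln (qw h)) \<longlongrightarrow> ln (snd D)) F"
        using F4 by auto
      have "fst D = Dc" using tendsto_unique[OF F5 D(2) c] .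
      moreover have "ln (snd D) = ln L" using tendsto_unique[OF F5 D(3) lnL] .
      then have "snd D = L" using D(1) L(1) by simp
      ultimately show "D = (Dc, L)" by (simp add: prod_eq_iff)
    next
      assume "D = (Dc, L)"
      then show "ivf_has_deriv fc fw a b x D" using F4 c lnL L by simp
    qed
  qed
qed
end
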